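(* Let $f(x)=\sum_{n\ge 1} f_n \frac{x^n}{n!}$ be a formal power series over a field of characteristic zero with $f_1=1$, so that $f'(x)=1+\sum_{n\ge1}f_{n+1}\frac{x^n}{n!}$ and $f$ has a compositional inverse $\bar f(x)$ (i.e. $f(\bar f(x))=\bar f(f(x))=x$). Then the production matrix of the exponential Riordan array $[f'(x), f(x)]$ equals $U\cdot\left[\frac{1}{\bar f'(x)}, x\right]$, where $U=(u_{n,k})_{n,k\ge 0}$ is the shift matrix with $u_{n,k}=1$ if $k=n+1$ and $u_{n,k}=0$ otherwise. Equivalently, if $r_{n,k}=\frac{n!}{k!}[x^n]\frac{x^k}{\bar f'(x)}$ denotes the $(n,k)$-entry of $\left[\frac{1}{\bar f'(x)}, x\right]$, then the $(n,k)$-entry of the production matrix of $[f'(x),f(x)]$ is $r_{n+1,k}$ for all $n,k\ge 0$ (i.e. the production matrix is $\left[\frac{1}{\bar f'(x)}, x\right]$ with its first row removed).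
   Context: For power series $g(x)=1+\sum_{n\ge1} g_n\frac{x^n}{n!}$ and $f(x)=x+\sum_{n\ge 2} f_n\frac{x^n}{n!}$, the exponential Riordan array $[g(x),f(x)]$ is the infinite lower-triangular matrix $(t_{n,k})_{n,k\ge0}$ with $t_{n,k}=\frac{n!}{k!}[x^n]\,g(x)f(x)^k$, where $[x^n]$ extracts the coefficient of $x^n$; its bivariate generating function is $g(x)e^{yf(x)}=\sum_{n,k} t_{n,k}\frac{x^n}{n!}y^k$. The production matrix of $[g(x),f(x)]$ is the infinite matrix $(p_{n,k})_{n,k\ge0}$ defined by $\sum_{n,k\ge0} p_{n,k}\frac{x^n}{n!}y^k = e^{xy}\bigl(Z(x)+yA(x)\bigr)$ (exponential in $x$, ordinary in $y$), where $A(x)=f'(\bar f(x))$ and $Z(x)=\frac{g'(\bar f(x))}{g(\bar f(x))}$, with $\bar f$ the compositional inverse of $f$. *)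

theory Defs
  imports "HOL-Computational_Algebra.Formal_Power_Series"
begin

definition exp_riordan_entry :: "'a::field_char_0 fps \<Rightarrow> 'a fps \<Rightarrow> nat \<Rightarrow> nat \<Rightarrow> 'a" where
  "exp_riordan_entry g f n k = (fact n / fact k) * (fps_nth (g * f ^ k) n)"

definition riordan_A :: "'a::field_char_0 fps \<Rightarrow> 'a fps" where
  "riordan_A f = fps_deriv f oo fps_inv f"

definition riordan_Z :: "'a::field_char_0 fps \<Rightarrow> 'a fps \<Rightarrow> 'a fps" where
  "riordan_Z g f = (fps_deriv g oo fps_inv f) / (g oo fps_inv f)"

text \<open>Production matrix: p_{n,k} = n! [x^n y^k] e^{xy}(Z(x) + y A(x)).
  Since e^{xy} = sum_j x^j y^j / j!, the coefficient of x^n y^k is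
  sum_{j<=n, j=k} Z_{n-j}/j!  +  sum_{j<=n, j+1=k} A_{n-j}/j!  (Z_m, A_m ordinary coefficients).\<close>
definition production_entry :: "'a::field_char_0 fps \<Rightarrow> 'a fps \<Rightarrow> nat \<Rightarrow> nat \<Rightarrow> 'a" where
  "production_entry g f n k = fact n *
     ((\<Sum>j\<le>n. if j = k then fps_nth (riordan_Z g f) (n - j) / fact j else 0)
    + (\<Sum>j\<le>n. if j + 1 = k then fps_nth (riordan_A f) (n - j) / fact j else 0))"

end

theory Submission
  imports Defs
begin
unbundle fps_syntax

theorem mainTheorem1:
  fixes f :: "'a::field_char_0 fps"
  assumes "fps_nth f 0 = 0" and "fps_nth f 1 = 1"
  shows "\<forall>n k. production_entry (fps_deriv f) f n k
           = exp_riordan_entry (inverse (fps_deriv (fps_inv f))) fps_X (Suc n) k"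
proof (intro allI)
  fix n k
  define h where "h = fps_inv f"
  define R where "R = inverse (fps_deriv h)"
  have h0: "h $ 0 = 0" unfolding h_def by (simp add: fps_inv_def)
  have h1: "h $ 1 = 1" unfolding h_def using assms by (simp add: fps_inv_def)
  have hd0: "fps_deriv h $ 0 = 1" using h1 by simp
  have R0: "R $ 0 = 1" unfolding R_def using hd0 by simp
  have hR: "fps_deriv h * R = 1" unfolding R_def using hd0 by (simp add: inverse_mult_eq_1')
  have fh: "f oo h = fps_X" unfolding h_def using assms by (intro fps_inv_right) auto
  have "fps_deriv (f oo h) = (fps_deriv f oo h) * fps_deriv h"
    using h0 by (rule fps_compose_deriv)
  hence "(fps_deriv f oo h) * fps_deriv h = 1" using fh by simp
  hence "(fps_deriv f oo h) * fps_deriv h * R = R" by simp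
  hence A: "fps_deriv f oo h = R" using hR by (simp add: mult.assoc)
  have "fps_deriv (fps_deriv f oo h) = (fps_deriv (fps_deriv f) oo h) * fps_deriv h"
    using h0 by (rule fps_compose_deriv)
  hence "fps_deriv R * R = (fps_deriv (fps_deriv f) oo h) * (fps_deriv h * R)"
    using A by (simp add: mult.assoc)
  hence B: "fps_deriv (fps_deriv f) oo h = fps_deriv R * R" using hR by simp
  have Rnz: "R \<noteq> 0" using R0 by auto
  have Z: "riordan_Z (fps_deriv f) f = fps_deriv R"
    unfolding riordan_Z_def h_def[symmetric] A B using Rnz by simp
  have AA: "riordan_A f = R" unfolding riordan_A_def h_def[symmetric] A ..
  have lhs: "production_entry (fps_deriv f) f n k = fact n *
     ((if k \<le> n then of_nat (n - k + 1) * R $ (n - k + 1) / fact k else 0)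
      + (if 1 \<le> k \<and> k \<le> n + 1 then R $ (n + 1 - k) / fact (k - 1) else 0))"
  proof -
    have s1: "(\<Sum>j\<le>n. if j = k then fps_nth (fps_deriv R) (n - j) / fact j else 0)
        = (if k \<le> n then of_nat (n - k + 1) * R $ (n - k + 1) / fact k else 0)"
      by (simp add: sum.delta)
    have s2: "(\<Sum>j\<le>n. if j + 1 = k then fps_nth R (n - j) / fact j else 0)
        = (if 1 \<le> k \<and> k \<le> n + 1 then R $ (n + 1 - k) / fact (k - 1) else 0)"
    proof (cases k)
      case 0 thus ?thesis by simp
    next
      case (Suc k')
      have "(\<Sum>j\<le>n. if j + 1 = k then fps_nth R (n - j) / fact j else 0)
          = (\<Sum>j\<le>n. if j = k' then fps_nth R (n - j) / fact j else 0)"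
        using Suc by (intro sum.cong) auto
      also have "\<dots> = (if k' \<le> n then R $ (n - k') / fact k' else 0)"
        by (simp add: sum.delta)
      finally show ?thesis using Suc by simp
    qed
    show ?thesis unfolding production_entry_def Z AA s1 s2 ..
  qed
  have rhs: "exp_riordan_entry (inverse (fps_deriv (fps_inv f))) fps_X (Suc n) k
      = (if k \<le> n + 1 then fact (Suc n) / fact k * R $ (n + 1 - k) else 0)"
    unfolding exp_riordan_entry_def R_def[symmetric] h_def[symmetric]
    by (simp add: fps_X_power_mult_right_nth)
  show "production_entry (fps_deriv f) f n k
           = exp_riordan_entry (inverse (fps_deriv (fps_inv f))) fps_X (Suc n) k"
  proof (cases k)
    case 0
    thus ?thesis unfolding lhs rhs by (simp add: fact_Suc algebra_simps)
  next
    case (Suc k')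
    show ?thesis
    proof (cases "k' \<le> n")
      case True
      define m where "m = n - k'"
      have nm: "n = k' + m" using True m_def by simp
      show ?thesis
      proof (cases m)
        case 0
        have "(1 + of_nat k' :: 'a) \<noteq> 0" by (metis of_nat_Suc of_nat_eq_0_iff Zero_not_Suc)
        thus ?thesis unfolding lhs rhs using Suc nm \<open>m = 0\<close> by simp
      next
        case (Suc m')
        have e1: "n - k + 1 = m" "n + 1 - k = m" "k \<le> n" "k \<le> n + 1" "1 \<le> k" "k - 1 = k'"
          using \<open>k = Suc k'\<close> nm Suc by auto
        have fk: "fact k = of_nat (Suc k') * (fact k' :: 'a)" using \<open>k = Suc k'\<close> by (simp add: fact_Suc)
        have fn: "fact (Suc n) = of_nat (Suc n) * (fact n :: 'a)" by (simp add: fact_Suc)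
        have K: "(of_nat (Suc k') :: 'a) \<noteq> 0" by (metis of_nat_eq_0_iff Zero_not_Suc)
        have c: "(fact k' :: 'a) \<noteq> 0" by simp
        have N: "(of_nat (Suc n) :: 'a) = of_nat m + of_nat (Suc k')"
          using nm by simp
        have gen: "\<And>F M r Kk C Nn :: 'a. Kk \<noteq> 0 \<Longrightarrow> C \<noteq> 0 \<Longrightarrow> Nn = M + Kk \<Longrightarrow>
            F * (M * r / (Kk * C) + r / C) = Nn * F / (Kk * C) * r"
          by (simp add: field_simps)
        have "k \<le> Suc n" "Suc 0 \<le> k" using e1 by auto
        thus ?thesis unfolding lhs rhs e1 fk fn using gen[OF K c N] e1 by simp
      qed
    next
      case False
      thus ?thesis unfolding lhs rhs using Suc by simp
    qed
  qed
qed

end
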